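(* Let $n\ge 2$, let $\beta\in B_n$ be a half-twist with $\pi(\beta)=(i,j)$, $i\neq j$, and let $k\ge 1$ be an integer. Then for every braid word $w$ representing $\beta^{2k}$ and all distinct $s,t\in\{1,\dots,n\}$, $$cr_{w}(s,t)=\begin{cases}k & \text{if } \{s,t\}=\{i,j\},\\ 0&\text{otherwise.}\end{cases}$$
   Context: $B_n$ is Artin's braid group with generators $\sigma_1,\dots,\sigma_{n-1}$; $\pi:B_n\to S_n$ is the homomorphism with $\pi(\sigma_i)=(i,i+1)$. A half-twist is an element of the conjugacy class of $\sigma_1$. Crossing index: let $w=\sigma_{i_1}^{e_1}\cdots\sigma_{i_l}^{e_l}$ ($e_r\in\{\pm1\}$) be a braid word; label the strings by their starting positions $1,\dots,n$, and track their positions as the letters are read left to right, each letter $\sigma_p^{\pm1}$ exchanging the strings currently at positions $p$ and $p+1$. By convention, in the letter $\sigma_p^{e}$ the string currently at position $p$ passes under the string currently at position $p+1$ if $e=1$, and the string at position $p+1$ passes under the one at position $p$ if $e=-1$. For distinct strings $s,t$, $cr_w(s,t)$ is the sum of the exponents $e_r$ over all letters of $w$ in which string $s$ passes under string $t$. *)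

theory Defs
  imports Main "HOL-Combinatorics.Transposition"
begin

text \<open>A braid letter (p, e) stands for sigma_p^(+1) if e = True and sigma_p^(-1) if e = False.\<close>
type_synonym braid_word = "(nat \<times> bool) list"

definition valid_word :: "nat \<Rightarrow> braid_word \<Rightarrow> bool" where
  "valid_word n w \<longleftrightarrow> (\<forall>(p, e) \<in> set w. 1 \<le> p \<and> p < n)"

definition word_inv :: "braid_word \<Rightarrow> braid_word" where
  "word_inv w = rev (map (\<lambda>(p, e). (p, \<not> e)) w)"

inductive braid_eq :: "nat \<Rightarrow> braid_word \<Rightarrow> braid_word \<Rightarrow> bool" for n where
  refl: "braid_eq n w w"
| sym: "braid_eq n w1 w2 \<Longrightarrow> braid_eq n w2 w1"
| trans: "braid_eq n w1 w2 \<Longrightarrow> braid_eq n w2 w3 \<Longrightarrow> braid_eq n w1 w3"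
| cancel: "valid_word n u \<Longrightarrow> valid_word n v \<Longrightarrow> 1 \<le> p \<Longrightarrow> p < n \<Longrightarrow>
    braid_eq n (u @ [(p, e), (p, \<not> e)] @ v) (u @ v)"
| comm: "valid_word n u \<Longrightarrow> valid_word n v \<Longrightarrow> 1 \<le> p \<Longrightarrow> p + 1 < q \<Longrightarrow> q < n \<Longrightarrow>
    braid_eq n (u @ [(p, True), (q, True)] @ v) (u @ [(q, True), (p, True)] @ v)"
| braid: "valid_word n u \<Longrightarrow> valid_word n v \<Longrightarrow> 1 \<le> p \<Longrightarrow> p + 1 < n \<Longrightarrow>
    braid_eq n (u @ [(p, True), (Suc p, True), (p, True)] @ v)
               (u @ [(Suc p, True), (p, True), (Suc p, True)] @ v)"

definition half_twist :: "nat \<Rightarrow> braid_word \<Rightarrow> bool" where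
  "half_twist n b \<longleftrightarrow> valid_word n b \<and>
     (\<exists>u. valid_word n u \<and> braid_eq n b (u @ [(1, True)] @ word_inv u))"

definition perm_of_word :: "braid_word \<Rightarrow> nat \<Rightarrow> nat" where
  "perm_of_word w = foldr (\<lambda>(p, e) g. transpose p (Suc p) \<circ> g) w id"

text \<open>Crossing index. f maps a current position to the label (starting position) of the
  string currently there.\<close>
fun cr_aux :: "(nat \<Rightarrow> nat) \<Rightarrow> braid_word \<Rightarrow> nat \<Rightarrow> nat \<Rightarrow> int" where
  "cr_aux f [] s t = 0"
| "cr_aux f ((p, e) # w) s t =
     (if e then (if f p = s \<and> f (Suc p) = t then 1 else 0)
      else (if f (Suc p) = s \<and> f p = t then -1 else 0))
     + cr_aux (f(p := f (Suc p), Suc p := f p)) w s t"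

definition cr :: "braid_word \<Rightarrow> nat \<Rightarrow> nat \<Rightarrow> int" where
  "cr w s t = cr_aux id w s t"

end

theory Submission
  imports Defs
begin

fun st :: "(nat \<Rightarrow> nat) \<Rightarrow> braid_word \<Rightarrow> nat \<Rightarrow> nat" where
  "st f [] = f"
| "st f ((p, e) # w) = st (f(p := f (Suc p), Suc p := f p)) w"

lemma cr_append: "cr_aux f (u @ v) s t = cr_aux f u s t + cr_aux (st f u) v s t"
  by (induction u arbitrary: f) auto

lemma st_append: "st f (u @ v) = st (st f u) v"
  by (induction u arbitrary: f) auto

definition eqv :: "braid_word \<Rightarrow> braid_word \<Rightarrow> bool" where
  "eqv a b \<longleftrightarrow> (\<forall>f s t. cr_aux f a s t = cr_aux f b s t) \<and> (\<forall>f. st f a = st f b)"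

lemma eqv_refl: "eqv a a" by (simp add: eqv_def)
lemma eqv_sym: "eqv a b \<Longrightarrow> eqv b a" by (simp add: eqv_def)
lemma eqv_trans: "eqv a b \<Longrightarrow> eqv b c \<Longrightarrow> eqv a c" by (simp add: eqv_def)

lemma eqv_append: "eqv a b \<Longrightarrow> eqv c d \<Longrightarrow> eqv (a @ c) (b @ d)"
  by (simp add: eqv_def cr_append st_append)

lemma swap2: "(f(p := f (Suc p), Suc p := f p))(p := (f(p := f (Suc p), Suc p := f p)) (Suc p),
   Suc p := (f(p := f (Suc p), Suc p := f p)) p) = f"
  by (rule ext) simp

lemma eqv_cancel: "eqv [(p, e), (p, \<not> e)] []"
  unfolding eqv_def
proof (intro conjI allI)
  fix f s t show "cr_aux f [(p, e), (p, \<not> e)] s t = cr_aux f [] s t"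
    by (cases e) simp_all
next
  fix f show "st f [(p, e), (p, \<not> e)] = st f []" using swap2[of f p] by simp
qed

lemma eqv_comm: "p + 1 < q \<Longrightarrow> eqv [(p, True), (q, True)] [(q, True), (p, True)]"
  unfolding eqv_def
proof (intro conjI allI)
  fix f s t assume "p + 1 < q"
  then show "cr_aux f [(p, True), (q, True)] s t = cr_aux f [(q, True), (p, True)] s t"
    by simp
next
  fix f assume "p + 1 < q"
  then show "st f [(p, True), (q, True)] = st f [(q, True), (p, True)]"
    by (intro ext) simp
qed

lemma eqv_braid: "eqv [(p, True), (Suc p, True), (p, True)] [(Suc p, True), (p, True), (Suc p, True)]"
  unfolding eqv_def
proof (intro conjI allI)
  fix f s t
  show "cr_aux f [(p, True), (Suc p, True), (p, True)] s t = cr_aux f [(Suc p, True), (p, True), (Suc p, True)] s t"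
    by simp
next
  fix f show "st f [(p, True), (Suc p, True), (p, True)] = st f [(Suc p, True), (p, True), (Suc p, True)]"
    by (intro ext) simp
qed

lemma eqv_ctx: "eqv x y \<Longrightarrow> eqv (u @ x @ v) (u @ y @ v)"
  by (intro eqv_append eqv_refl)

lemma braid_eqv: "braid_eq n w1 w2 \<Longrightarrow> eqv w1 w2"
proof (induction rule: braid_eq.induct)
  case (cancel u v p e)
  then show ?case using eqv_ctx[OF eqv_cancel[of p e], of u v] by simp
next
  case (comm u v p q)
  then show ?case using eqv_ctx[OF eqv_comm[of p q], of u v] by simp
next
  case (braid u v p)
  then show ?case using eqv_ctx[OF eqv_braid[of p], of u v] by simp
qed (auto intro: eqv_refl eqv_sym eqv_trans)

lemma st_perm: "st f w = f \<circ> perm_of_word w"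
proof (induction w arbitrary: f)
  case Nil
  then show ?case by (simp add: perm_of_word_def)
next
  case (Cons x w)
  obtain p e where x: "x = (p, e)" by (cases x)
  have h: "f(p := f (Suc p), Suc p := f p) = f \<circ> transpose p (Suc p)"
    by (auto simp: fun_eq_iff transpose_def)
  have "st f (x # w) = st (f \<circ> transpose p (Suc p)) w" by (simp only: x st.simps h)
  also have "\<dots> = (f \<circ> transpose p (Suc p)) \<circ> perm_of_word w" by (rule Cons)
  also have "\<dots> = f \<circ> perm_of_word (x # w)" by (simp add: perm_of_word_def x comp_assoc)
  finally show ?case .
qed

lemma eqv_inv: "eqv (u @ word_inv u) []"
proof (induction u)
  case Nil
  then show ?case by (simp add: word_inv_def eqv_refl)
next
  case (Cons x u)
  obtain p e where x: "x = (p, e)" by (cases x)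
  have wi: "word_inv (x # u) = word_inv u @ [(p, \<not> e)]"
    by (simp add: word_inv_def x)
  have "eqv ([x] @ (u @ word_inv u) @ [(p, \<not> e)]) ([x] @ [] @ [(p, \<not> e)])"
    by (intro eqv_append eqv_refl Cons)
  moreover have "eqv ([x] @ [] @ [(p, \<not> e)]) []"
    using eqv_cancel[of p e] by (simp add: x)
  ultimately show ?case unfolding wi by (auto intro: eqv_trans)
qed

lemma word_inv_inv: "word_inv (word_inv u) = u"
  by (induction u) (auto simp: word_inv_def)

lemma eqv_inv2: "eqv (word_inv u @ u) []"
  using eqv_inv[of "word_inv u"] by (simp add: word_inv_inv)

lemma eqv_rep: "eqv (concat (replicate m (u @ [(1, True)] @ word_inv u)))
   (u @ replicate m (1, True) @ word_inv u)"
proof (induction m)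
  case 0
  then show ?case using eqv_sym[OF eqv_inv[of u]] by simp
next
  case (Suc m)
  have "eqv ((u @ [(1, True)] @ word_inv u) @ concat (replicate m (u @ [(1, True)] @ word_inv u)))
      ((u @ [(1, True)] @ word_inv u) @ (u @ replicate m (1, True) @ word_inv u))"
    by (intro eqv_append eqv_refl Suc)
  moreover have "(u @ [(1, True)] @ word_inv u) @ (u @ replicate m (1, True) @ word_inv u)
     = (u @ [(1, True)]) @ (word_inv u @ u) @ (replicate m (1, True) @ word_inv u)" by simp
  moreover have "eqv ((u @ [(1, True)]) @ (word_inv u @ u) @ (replicate m (1, True) @ word_inv u))
     ((u @ [(1, True)]) @ [] @ (replicate m (1, True) @ word_inv u))"
    by (intro eqv_ctx eqv_inv2)
  ultimately show ?case by (auto intro: eqv_trans)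
qed

lemma rep_sigma:
  "cr_aux f (replicate (2 * k) (1, True)) s t =
     int k * ((if f 1 = s \<and> f 2 = t then 1 else 0) + (if f 2 = s \<and> f 1 = t then 1 else 0))
   \<and> st f (replicate (2 * k) (1, True)) = f"
proof (induction k)
  case 0
  then show ?case by simp
next
  case (Suc k)
  have r: "replicate (2 * Suc k) (1::nat, True) = [(1, True), (1, True)] @ replicate (2 * k) (1, True)"
    by (simp add: numeral_2_eq_2)
  have f2: "st f [(1, True), (1, True)] = f" by (auto simp: fun_eq_iff numeral_2_eq_2)
  have c2: "cr_aux f [(1, True), (1, True)] s t = (if f 1 = s \<and> f 2 = t then 1 else 0) + (if f 2 = s \<and> f 1 = t then 1 else 0)"
    by (simp add: numeral_2_eq_2)
  show ?case unfolding r cr_append st_append f2 c2 using Suc by (simp add: algebra_simps)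
qed

theorem lemma3p4:
  fixes n i j k s t :: nat and b w :: braid_word
  assumes "n \<ge> 2"
    and "half_twist n b"
    and "perm_of_word b = transpose i j" and "i \<noteq> j"
    and "k \<ge> 1"
    and "valid_word n w"
    and "braid_eq n w (concat (replicate (2 * k) b))"
    and "s \<in> {1..n}" and "t \<in> {1..n}" and "s \<noteq> t"
  shows "cr w s t = (if {s, t} = {i, j} then int k else 0)"
proof -
  obtain u where hb: "braid_eq n b (u @ [(1, True)] @ word_inv u)"
    using assms(2) unfolding half_twist_def by blast
  define X where "X = u @ [(1, True)] @ word_inv u"
  have eb: "eqv b X" using braid_eqv[OF hb] X_def by simp
  have ecat: "\<And>m. eqv (concat (replicate m b)) (concat (replicate m X))"
  proof -
    fix m show "eqv (concat (replicate m b)) (concat (replicate m X))"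
      by (induction m) (auto intro: eqv_append eqv_refl eb)
  qed
  have ew: "eqv w (u @ replicate (2 * k) (1, True) @ word_inv u)"
    using eqv_trans[OF braid_eqv[OF assms(7)] eqv_trans[OF ecat eqv_rep[of "2*k" u, folded X_def]]] .
  define g where "g = st id u"
  define h where "h = perm_of_word (word_inv u)"
  have gp: "g = perm_of_word u" using st_perm[of id u] g_def by simp
  have c0: "cr_aux id u s t + cr_aux g (word_inv u) s t = 0"
    using eqv_inv[of u] unfolding eqv_def g_def by (simp add: cr_append)
  have "st g (word_inv u) = id"
    using eqv_inv[of u] unfolding eqv_def g_def st_append by simp
  hence s0: "g \<circ> h = id" by (simp add: st_perm h_def)
  have "st (st id (word_inv u)) u = id"
    using eqv_inv2[of u] unfolding eqv_def st_append by simp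
  hence s1: "h \<circ> g = id" by (simp add: st_perm h_def gp)
  have R: "cr_aux g (replicate (2 * k) (1, True)) s t =
     int k * ((if g 1 = s \<and> g 2 = t then 1 else 0) + (if g 2 = s \<and> g 1 = t then 1 else 0))"
   and Rs: "st g (replicate (2 * k) (1, True)) = g" using rep_sigma by auto
  have "cr w s t = cr_aux id (u @ replicate (2 * k) (1, True) @ word_inv u) s t"
    using ew unfolding eqv_def cr_def by simp
  also have "\<dots> = int k * ((if g 1 = s \<and> g 2 = t then 1 else 0) + (if g 2 = s \<and> g 1 = t then 1 else 0))"
    using c0 R Rs by (simp add: cr_append st_append g_def)
  finally have cw: "cr w s t = \<dots>" .
  have "st id b = st id X" using eb unfolding eqv_def by simp
  hence pb: "perm_of_word b = st id X" by (metis st_perm comp_id fun.map_id)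
  also have "\<dots> = st (st g [(1, True)]) (word_inv u)" by (simp add: X_def st_append g_def)
  finally have "perm_of_word b = (st g [(1, True)]) \<circ> h" by (simp add: st_perm h_def)
  hence "transpose i j (g 1) = (st g [(1, True)]) (h (g 1))" using assms(3) by simp
  also have "h (g 1) = 1" using s1 by (metis comp_apply id_apply)
  finally have tij: "transpose i j (g 1) = g 2" by (simp add: numeral_2_eq_2)
  have gne: "g 1 \<noteq> g 2" using s1 by (metis comp_apply id_apply numeral_One num.distinct(1) numeral_eq_iff)
  have ij: "{g 1, g 2} = {i, j}" using tij gne
    by (auto simp: transpose_def split: if_splits)
  show ?thesis unfolding cw using ij assms(10) assms(4) by (auto simp: doubleton_eq_iff)
qed

end
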